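(* Let $N\ge1$, $0<\lambda\le\Lambda$, assume $\beta=\frac{\Lambda}{\lambda}(N-1)+1>2$, and let $q>1$. Let $u:\mathbb{R}^N\to[0,\infty)$ be a nonnegative viscosity solution of $\mathcal{M}^+_{\lambda,\Lambda}(D^2u)\ge u^q$ in $\mathbb{R}^N$, and set $m(R)=\min_{|x|\le R}u(x)$. Then there exists a constant $C>0$ such that $$m(R)\le C R^{-\frac{2}{q-1}}\quad\text{for all }R>0.$$
   Context: For $M\in\mathrm{Sym}_N$ with eigenvalues $e_1,\dots,e_N$, $\mathcal{M}^+_{\lambda,\Lambda}(M)=\sup_{\lambda I_N\le A\le\Lambda I_N}(-\mathrm{Tr}(AM))=-\lambda\sum_{e_k>0}e_k-\Lambda\sum_{e_k<0}e_k$. A viscosity solution of an inequality $G(x,u,Du,D^2u)\ge 0$ in an open set $\Omega$ is a lower semicontinuous $u$ such that for every $x_0\in\Omega$ and every $\varphi\in C^2$ for which $u-\varphi$ has a local minimum at $x_0$, $G(x_0,u(x_0),D\varphi(x_0),D^2\varphi(x_0))\ge0$. *)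

theory Defs
  imports "HOL-Analysis.Analysis"
begin

definition sym_mat :: "real^'n^'n \<Rightarrow> bool" where
  "sym_mat A \<longleftrightarrow> transpose A = A"

definition loewner_between :: "real \<Rightarrow> real \<Rightarrow> real^'n^'n \<Rightarrow> bool" where
  "loewner_between l L A \<longleftrightarrow> sym_mat A \<and>
     (\<forall>\<xi>::real^'n. l * (\<xi> \<bullet> \<xi>) \<le> \<xi> \<bullet> (A *v \<xi>) \<and> \<xi> \<bullet> (A *v \<xi>) \<le> L * (\<xi> \<bullet> \<xi>))"

definition pucci_max :: "real \<Rightarrow> real \<Rightarrow> real^'n^'n \<Rightarrow> real" where
  "pucci_max l L M = (SUP A\<in>{A. loewner_between l L A}. - trace (A ** M))"

definition C2_with :: "(real^'n \<Rightarrow> real) \<Rightarrow> (real^'n \<Rightarrow> real^'n) \<Rightarrow> (real^'n \<Rightarrow> real^'n^'n) \<Rightarrow> bool" where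
  "C2_with \<phi> g H \<longleftrightarrow>
     (\<forall>x. (\<phi> has_derivative (\<lambda>h. g x \<bullet> h)) (at x)) \<and>
     (\<forall>x. (g has_derivative (\<lambda>h. H x *v h)) (at x)) \<and>
     continuous_on UNIV H"

definition lsc :: "(real^'n \<Rightarrow> real) \<Rightarrow> bool" where
  "lsc u \<longleftrightarrow> (\<forall>x. \<forall>t < u x. \<forall>\<^sub>F y in at x. t < u y)"

text \<open>Viscosity solution (supersolution sense) of M^+(D^2 u) >= u^q in R^N.\<close>
definition visc_pucci_ineq :: "real \<Rightarrow> real \<Rightarrow> real \<Rightarrow> (real^'n \<Rightarrow> real) \<Rightarrow> bool" where
  "visc_pucci_ineq l L q u \<longleftrightarrow> lsc u \<and>
     (\<forall>x0 \<phi> g H. C2_with \<phi> g H \<and>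
        (\<exists>e>0. \<forall>y\<in>ball x0 e. u y - \<phi> y \<ge> u x0 - \<phi> x0) \<longrightarrow>
        pucci_max l L (H x0) - u x0 powr q \<ge> 0)"

end

theory Submission
  imports Defs
begin


lemma mvform: "(\<chi> i j. a*(if i=j then 1 else 0) + b*(x$i*x$j)) *v h = a *\<^sub>R h + (b*(x\<bullet>h)) *\<^sub>R (x::real^'n)"
proof -
  have "(\<Sum>j\<in>UNIV. (a*(if i=j then 1 else 0) + b*(x$i*x$j)) * h$j) = a * h$i + b*(\<Sum>j\<in>UNIV. x$j*h$j) * x$i" for i
  proof -
    have "(\<Sum>j\<in>UNIV. (a*(if i=j then 1 else 0) + b*(x$i*x$j)) * h$j) = (\<Sum>j\<in>UNIV. (if i=j then a*h$j else 0)) + (\<Sum>j\<in>UNIV. (b*x$i)*(x$j*h$j))"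
    proof -
      have eq: "\<And>j. (a*(if i=j then 1 else 0) + b*(x$i*x$j)) * h$j = (if i=j then a*h$j else 0) + (b*x$i)*(x$j*h$j)"
        by (auto simp: algebra_simps)
      show ?thesis by (simp only: eq sum.distrib)
    qed
    also have "\<dots> = a * h$i + b*(\<Sum>j\<in>UNIV. x$j*h$j) * x$i"
      by (simp add: sum_distrib_left[symmetric])
    finally show ?thesis .
  qed
  then show ?thesis by (simp add: vec_eq_iff matrix_vector_mult_def inner_vec_def mult.commute)
qed



lemma keyeq: "- ((- P - Q) / D) = (Q + P) / (D::real)"
  by (simp add: diff_divide_distrib add_divide_distrib)

lemma C2_phi:
  fixes A c k e :: real
  assumes "c>0"
  shows "C2_with (\<lambda>x::real^'n. A*(c + x\<bullet>x) powr (-k) - e)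
     (\<lambda>x. (-2*A*k*(c+x\<bullet>x) powr (-k-1)) *\<^sub>R x)
     (\<lambda>x. \<chi> i j. (-2*A*k*(c+x\<bullet>x) powr (-k-1))*(if i=j then 1 else 0) + (4*A*k*(k+1)*(c+x\<bullet>x) powr (-k-2))*(x$i*x$j))"
  unfolding C2_with_def
proof (intro conjI allI)
  fix x :: "real^'n"
  have pos: "0 < c + x\<bullet>x" using assms by (simp add: add_pos_nonneg)
  have e1: "(c+x\<bullet>x) powr (-k-1) = (c+x\<bullet>x) powr (-k) / (c+x\<bullet>x)"
    using pos by (simp add: powr_diff)
  have e2: "(c+x\<bullet>x) powr (-k-2) = (c+x\<bullet>x) powr (-k-1) / (c+x\<bullet>x)"
  proof -
    have "(c+x\<bullet>x) powr (-k-2) = (c+x\<bullet>x) powr ((-k-1) - 1)" by (simp add: algebra_simps)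
    also have "\<dots> = (c+x\<bullet>x) powr (-k-1) / (c+x\<bullet>x)" using pos by (simp only: powr_diff powr_one_gt_zero_iff) simp
    finally show ?thesis .
  qed
  show "((\<lambda>x. A*(c + x\<bullet>x) powr (-k) - e) has_derivative (\<lambda>h. ((-2*A*k*(c+x\<bullet>x) powr (-k-1)) *\<^sub>R x) \<bullet> h)) (at x)"
    using pos
    apply (auto intro!: derivative_eq_intros simp: )
    apply (simp add: e1 inner_commute field_simps fun_eq_iff)
    done
  show "((\<lambda>x. (-2*A*k*(c+x\<bullet>x) powr (-k-1)) *\<^sub>R x) has_derivative (\<lambda>h. (\<chi> i j. (-2*A*k*(c+x\<bullet>x) powr (-k-1))*(if i=j then 1 else 0) + (4*A*k*(k+1)*(c+x\<bullet>x) powr (-k-2))*(x$i*x$j)) *v h)) (at x)"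
    unfolding mvform
    using pos
    apply (auto intro!: derivative_eq_intros simp: )
    apply (simp add: e2 inner_commute fun_eq_iff)
    apply (intro allI)
    apply (simp only: scaleR_minus_left[symmetric])
    apply (rule arg_cong[where f="\<lambda>t. t *\<^sub>R x"])
    apply (simp add: algebra_simps)
    apply (rule keyeq)
    done
next
  show "continuous_on UNIV (\<lambda>x::real^'n. \<chi> i j. (-2*A*k*(c+x\<bullet>x) powr (-k-1))*(if i=j then 1 else 0) + (4*A*k*(k+1)*(c+x\<bullet>x) powr (-k-2))*(x$i*x$j))"
    using assms
  proof -
    have pos: "\<And>x::real^'n. 0 < c + x\<bullet>x" using assms by (simp add: add_pos_nonneg)
    have p: "continuous_on UNIV (\<lambda>x::real^'n. (c+x\<bullet>x) powr r)" for r
      by (rule continuous_on_powr) (auto intro!: continuous_intros, metis pos less_irrefl)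
    show ?thesis
      by (intro continuous_on_vec_lambda continuous_on_add continuous_on_mult continuous_on_const p continuous_on_component continuous_on_id)
  qed
qed

lemma C2_quad:
  fixes d R :: real
  shows "C2_with (\<lambda>x::real^'n. d*(R\<^sup>2 - x\<bullet>x))
     (\<lambda>x. (-2*d) *\<^sub>R x)
     (\<lambda>x. \<chi> i j. (-2*d)*(if i=j then 1 else 0) + 0*(x$i*x$j))"
  unfolding C2_with_def
proof (intro conjI allI)
  fix x :: "real^'n"
  show "((\<lambda>x. d*(R\<^sup>2 - x\<bullet>x)) has_derivative (\<lambda>h. ((-2*d) *\<^sub>R x) \<bullet> h)) (at x)"
    apply (auto intro!: derivative_eq_intros simp: )
    apply (simp add: inner_commute field_simps fun_eq_iff)
    done
  show "((\<lambda>x. (-2*d) *\<^sub>R x) has_derivative (\<lambda>h. (\<chi> i j. (-2*d)*(if i=j then 1 else 0) + 0*(x$i*x$j)) *v h)) (at x)"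
    unfolding mvform
    by (auto intro!: derivative_eq_intros)
next
  show "continuous_on UNIV (\<lambda>x::real^'n. \<chi> i j. (-2*d)*(if i=j then 1 else 0) + 0*(x$i*x$j))"
    by (intro continuous_on_vec_lambda continuous_intros)
qed


lemma pucci_bound:
  fixes x :: "real^'n" and a b l L :: real
  assumes "0<l" "l \<le> L" "a \<le> 0" "b \<ge> 0"
  shows "pucci_max l L (\<chi> i j. a * (if i = j then 1 else 0) + b * (x$i * x$j)) \<le> - a * real CARD('n) * L - b * l * (x \<bullet> x)"
proof -
  have "loewner_between l L (mat l :: real^'n^'n)"
    unfolding loewner_between_def sym_mat_def
  proof (intro conjI allI)
    fix \<xi> :: "real^'n"
    have row: "(\<Sum>j\<in>UNIV. (mat l::real^'n^'n)$i$j * \<xi>$j) = l*\<xi>$i" for i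
    proof -
      have "(\<Sum>j\<in>UNIV. (mat l::real^'n^'n)$i$j * \<xi>$j) = (\<Sum>j\<in>UNIV. if i = j then l*\<xi>$j else 0)"
        by (rule sum.cong) (auto simp: mat_def)
      then show ?thesis by simp
    qed
    have "mat l *v \<xi> = l *\<^sub>R \<xi>" by (simp add: vec_eq_iff matrix_vector_mult_def row)
    then have e: "\<xi> \<bullet> (mat l *v \<xi>) = l * (\<xi> \<bullet> \<xi>)" by simp
    show "l * (\<xi> \<bullet> \<xi>) \<le> \<xi> \<bullet> (mat l *v \<xi>)" using e by simp
    show "\<xi> \<bullet> (mat l *v \<xi>) \<le> L * (\<xi> \<bullet> \<xi>)" using e assms by (simp add: mult_right_mono)
  qed (simp add: transpose_mat)
  then have "(mat l :: real^'n^'n) \<in> {A. loewner_between l L A}" by simp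
  then have ne: "{A :: real^'n^'n. loewner_between l L A} \<noteq> {}" by (metis empty_iff)
  show ?thesis unfolding pucci_max_def
  proof (rule cSUP_least[OF ne])
    fix A :: "real^'n^'n" assume "A \<in> {A. loewner_between l L A}"
    then have lo: "\<And>\<xi>. l*(\<xi>\<bullet>\<xi>) \<le> \<xi> \<bullet> (A *v \<xi>) \<and> \<xi> \<bullet> (A *v \<xi>) \<le> L*(\<xi>\<bullet>\<xi>)"
      by (simp add: loewner_between_def)
    have tr: "trace (A ** (\<chi> i j. a * (if i = j then 1 else 0) + b * (x$i * x$j))) = a * trace A + b * (x \<bullet> (A *v x))"
    proof -
      have "trace (A ** (\<chi> i j. a * (if i = j then 1 else 0) + b * (x$i * x$j))) =
         (\<Sum>i\<in>UNIV. \<Sum>j\<in>UNIV. (if j = i then a * A$i$j else 0) + b * (x$i * (A$i$j * x$j)))"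
        apply (simp add: trace_def matrix_matrix_mult_def algebra_simps)
        apply (intro sum.cong refl)
        apply simp
        done
      also have "\<dots> = a * trace A + b * (x \<bullet> (A *v x))"
        by (simp add: sum.distrib trace_def inner_vec_def matrix_vector_mult_def sum_distrib_left)
      finally show ?thesis .
    qed
    have diag: "A$i$i \<le> L" for i
    proof -
      have "axis i 1 \<bullet> (A *v axis i 1) = A$i$i"
        by (simp add: inner_axis' matrix_vector_mult_basis column_def)
      moreover have "axis i (1::real) \<bullet> axis i 1 = 1" by (simp add: inner_axis_axis)
      ultimately show ?thesis using lo[of "axis i 1"] by simp
    qed
    have trA: "trace A \<le> real CARD('n) * L"
      unfolding trace_def using sum_bounded_above[of UNIV "\<lambda>i. A$i$i" L] diag by simp
    have xA: "l * (x\<bullet>x) \<le> x \<bullet> (A *v x)" using lo by blast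
    have 1: "- a * trace A \<le> - a * (real CARD('n) * L)" using trA assms by (intro mult_left_mono) auto
    have 2: "b * (l * (x\<bullet>x)) \<le> b * (x \<bullet> (A *v x))" using xA assms by (simp add: mult_left_mono)
    show "- trace (A ** (\<chi> i j. a * (if i = j then 1 else 0) + b * (x$i * x$j))) \<le> - a * real CARD('n) * L - b * l * (x \<bullet> x)"
      unfolding tr using 1 2 by (simp add: algebra_simps)
  qed
qed

lemma lsc_diff_cont:
  fixes u w :: "real^'n \<Rightarrow> real"
  assumes "lsc u" "continuous_on UNIV w"
  shows "\<forall>x. \<forall>t < u x - w x. \<forall>\<^sub>F y in at x. t < u y - w y"
proof (intro allI impI)
  fix x t assume t: "t < u x - w x"
  define d where "d = u x - w x - t"
  have d: "d > 0" using t by (simp add: d_def)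
  have ev1: "\<forall>\<^sub>F y in at x. u x - d/2 < u y" using assms(1) d unfolding lsc_def by auto
  have "isCont w x" using assms(2) by (simp add: continuous_on_eq_continuous_at)
  then have "(w \<longlongrightarrow> w x) (at x)" by (simp add: isCont_def)
  then have ev2: "\<forall>\<^sub>F y in at x. dist (w y) (w x) < d/2" using d by (intro tendstoD) auto
  show "\<forall>\<^sub>F y in at x. t < u y - w y"
    using ev1 ev2
  proof eventually_elim
    case (elim y)
    have "w y - w x < d/2" using elim(2) unfolding dist_real_def by linarith
    then show ?case using elim(1) unfolding d_def by (simp add: field_simps)
  qed
qed

lemma lsc_attains_min:
  fixes f :: "'a::metric_space \<Rightarrow> real"
  assumes lsc: "\<forall>x. \<forall>t<f x. \<forall>\<^sub>F y in at x. t < f y" and "compact S" "S \<noteq> {}"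
  shows "\<exists>x\<in>S. \<forall>y\<in>S. f x \<le> f y"
proof (rule ccontr)
  assume "\<not> ?thesis"
  then have "\<forall>x\<in>S. \<exists>y\<in>S. f y < f x" by (auto simp: not_le)
  then obtain g where g: "\<forall>x\<in>S. g x \<in> S \<and> f (g x) < f x" by metis
  have "\<forall>x\<in>S. \<exists>d>0. \<forall>z. dist z x < d \<longrightarrow> f (g x) < f z"
  proof
    fix x assume x: "x \<in> S"
    have "\<forall>\<^sub>F y in at x. f (g x) < f y" using lsc g x by blast
    then obtain d where d: "d>0" "\<forall>z. z \<noteq> x \<and> dist z x < d \<longrightarrow> f (g x) < f z"
      unfolding eventually_at by auto
    show "\<exists>d>0. \<forall>z. dist z x < d \<longrightarrow> f (g x) < f z"
      using d g x by (metis)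
  qed
  then obtain d where d: "\<forall>x\<in>S. d x > 0 \<and> (\<forall>z. dist z x < d x \<longrightarrow> f (g x) < f z)" by metis
  have "S \<subseteq> (\<Union>x\<in>S. ball x (d x))" using d by auto
  then obtain C where C: "C \<subseteq> S" "finite C" "S \<subseteq> (\<Union>x\<in>C. ball x (d x))"
    using compactE_image[OF assms(2), of S "\<lambda>x. ball x (d x)"] by auto
  have Cne: "C \<noteq> {}" using C assms(3) by auto
  define v where "v = Min (f ` g ` C)"
  have "v \<in> f ` g ` C" unfolding v_def using C Cne by (intro Min_in) auto
  then obtain z where z: "z \<in> g ` C" "f z = v" by auto
  have zmin: "\<forall>w\<in>g ` C. f z \<le> f w" using z C unfolding v_def by auto
  have "z \<in> S" using z C g by auto
  then obtain x where x: "x \<in> C" "z \<in> ball x (d x)" using C by auto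
  then have "f (g x) < f z" using d C by (auto simp: dist_commute)
  moreover have "f z \<le> f (g x)" using zmin x by auto
  ultimately show False by simp
qed



lemma visc_apply:
  assumes "visc_pucci_ineq l L q u" "C2_with \<phi> g H" "e > 0" "\<forall>y\<in>ball x0 e. u y - \<phi> y \<ge> u x0 - \<phi> x0"
  shows "u x0 powr q \<le> pucci_max l L (H x0)"
  using assms unfolding visc_pucci_ineq_def by force

lemma stepA:
  fixes u :: "real^'n \<Rightarrow> real"
  assumes l: "0<l" "l \<le> L" and nn: "\<forall>x. u x \<ge> 0" and V: "visc_pucci_ineq l L q u" and R: "R>0" and q: "q > 0"
  and x: "x \<in> cball 0 R"
  shows "u x \<ge> (Inf (u ` cball 0 R)) powr q / (4*real CARD('n)*L) * (R\<^sup>2 - x\<bullet>x)"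
proof -
  define m where "m = Inf (u ` cball 0 R)"
  define N where "N = real CARD('n)"
  have N: "N > 0" unfolding N_def by simp
  have bdd: "bdd_below (u ` S)" for S using nn by (auto intro: bdd_belowI[of _ 0])
  have mle: "m \<le> u y" if "y \<in> cball 0 R" for y unfolding m_def using that bdd by (intro cInf_lower) auto
  have ne: "cball 0 R \<noteq> {}" using R by auto
  have m0: "m \<ge> 0" unfolding m_def using ne nn by (intro cInf_greatest) auto
  define d where "d = m powr q / (4*N*L)"
  show ?thesis
  proof (cases "m = 0")
    case True
    then show ?thesis using nn by (simp add: m_def)
  next
    case False
    then have mpos: "m > 0" using m0 by simp
    have mq: "m powr q > 0" using mpos by simp
    have dpos: "d > 0" unfolding d_def using mq N l by simp
    show ?thesis
    proof (rule ccontr)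
      assume "\<not> ?thesis"
      then have ux: "u x - d*(R\<^sup>2 - x\<bullet>x) < 0" unfolding d_def m_def N_def by simp
      define w where "w = (\<lambda>y::real^'n. d*(R\<^sup>2 - y\<bullet>y))"
      have wc: "continuous_on UNIV w" unfolding w_def by (intro continuous_intros)
      have lu: "lsc u" using V by (simp add: visc_pucci_ineq_def)
      obtain xs where xs: "xs \<in> cball 0 R" "\<forall>y\<in>cball 0 R. u xs - w xs \<le> u y - w y"
        using lsc_attains_min[OF lsc_diff_cont[OF lu wc] compact_cball ne] by blast
      have fneg: "u xs - w xs < 0" using xs x ux unfolding w_def by force
      have "norm xs \<noteq> R"
      proof
        assume "norm xs = R"
        then have "xs \<bullet> xs = R\<^sup>2" by (simp add: power2_norm_eq_inner[symmetric])
        then have "w xs = 0" unfolding w_def by simp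
        then show False using fneg nn by (metis diff_zero not_less)
      qed
      then have "xs \<in> ball 0 R" using xs by auto
      then obtain e where e: "e > 0" "ball xs e \<subseteq> ball 0 R"
        using open_ball openE by blast
      have touch: "\<forall>y\<in>ball xs e. u y - w y \<ge> u xs - w xs" using e xs by auto
      have "u xs powr q \<le> pucci_max l L (\<chi> i j. (-2*d)*(if i=j then 1 else 0) + 0*(xs$i*xs$j))"
        using visc_apply[OF V C2_quad[of d R] e(1)] touch unfolding w_def by simp
      also have "\<dots> \<le> - (-2*d) * N * L - 0 * l * (xs\<bullet>xs)"
        unfolding N_def using l dpos by (intro pucci_bound) auto
      also have "\<dots> = m powr q / 2" unfolding d_def using N l by (simp add: field_simps)
      finally have 1: "u xs powr q \<le> m powr q / 2" .
      have "m powr q \<le> u xs powr q" using mle[OF xs(1)] m0 q by (intro powr_mono2) auto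
      then show False using 1 mq by simp
    qed
  qed
qed



lemma stepB:
  fixes u :: "real^'n \<Rightarrow> real"
  assumes l: "0<l" "l \<le> L" and nn: "\<forall>x. u x \<ge> 0" and V: "visc_pucci_ineq l L q u" and \<rho>: "\<rho>>0" and q: "q > 0"
  and x: "norm x \<le> 2*\<rho>"
  shows "u x \<ge> Inf (u ` cball 0 \<rho>) * (2/5) powr (real CARD('n) * L / l)"
proof -
  define m where "m = Inf (u ` cball 0 \<rho>)"
  define N where "N = real CARD('n)"
  define k where "k = N * L / l"
  have N: "N \<ge> 1" unfolding N_def by simp
  have kpos: "k > 0" unfolding k_def using N l by simp
  have bdd: "bdd_below (u ` S)" for S using nn by (auto intro: bdd_belowI[of _ 0])
  have mle: "m \<le> u y" if "y \<in> cball 0 \<rho>" for y unfolding m_def using that bdd by (intro cInf_lower) auto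
  have ne: "cball 0 \<rho> \<noteq> {}" using \<rho> by auto
  have m0: "m \<ge> 0" unfolding m_def using ne nn by (intro cInf_greatest) auto
  have p1: "(2/5::real) powr k \<le> 1" using kpos by (intro powr_le1) auto
  have goal: "u x \<ge> m * (2/5) powr k"
  proof (cases "m = 0 \<or> norm x \<le> \<rho>")
    case True
    then show ?thesis
    proof
      assume "m = 0" then show ?thesis using nn by simp
    next
      assume "norm x \<le> \<rho>"
      then have "m \<le> u x" using mle by simp
      moreover have "m * (2/5) powr k \<le> m" using p1 m0 by (simp add: mult_left_le)
      ultimately show ?thesis by simp
    qed
  next
    case False
    then have mpos: "m > 0" and xr: "norm x > \<rho>" using m0 by auto
    define c where "c = \<rho>\<^sup>2"
    have cpos: "c > 0" unfolding c_def using \<rho> by simp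
    define A where "A = m * (2*c) powr k"
    have Apos: "A > 0" unfolding A_def using mpos cpos by simp
    have Aid: "A * (c + c) powr (-k) = m"
    proof -
      have "(2*c) powr k * (2*c) powr (-k) = 1" using cpos by (simp add: powr_add[symmetric])
      then show ?thesis unfolding A_def by (simp add: mult_2[symmetric])
    qed
    have claim: "u y \<ge> A * (c + y\<bullet>y) powr (-k) - \<epsilon>" if eps: "\<epsilon> > 0" and y: "norm y \<ge> \<rho>" for y \<epsilon>
    proof (rule ccontr)
      assume "\<not> ?thesis"
      then have uy: "u y < A * (c + y\<bullet>y) powr (-k) - \<epsilon>" by simp
      define w where "w = (\<lambda>z::real^'n. A * (c + z\<bullet>z) powr (-k) - \<epsilon>)"
      define Rb where "Rb = sqrt ((A/\<epsilon>) powr (1/k)) + \<rho>"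
      have Rbr: "Rb \<ge> \<rho>" unfolding Rb_def by simp
      have far: "w z < 0" if "norm z \<ge> Rb" for z
      proof -
        have "sqrt ((A/\<epsilon>) powr (1/k)) \<le> norm z" using that \<rho> unfolding Rb_def by simp
        then have "(A/\<epsilon>) powr (1/k) \<le> (norm z)\<^sup>2"
          by (metis norm_ge_zero powr_ge_zero real_le_lsqrt real_sqrt_le_iff sqrt_le_D)
        then have "(A/\<epsilon>) powr (1/k) < c + z\<bullet>z" using cpos by (simp add: power2_norm_eq_inner)
        then have "((A/\<epsilon>) powr (1/k)) powr k < (c + z\<bullet>z) powr k"
          using kpos by (intro powr_less_mono2) auto
        moreover have "((A/\<epsilon>) powr (1/k)) powr k = A/\<epsilon>" using kpos Apos eps by (simp add: powr_powr)
        ultimately have "A/\<epsilon> < (c + z\<bullet>z) powr k" by simp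
        then have "A < \<epsilon> * (c + z\<bullet>z) powr k" using eps by (simp add: field_simps)
        moreover have "(c + z\<bullet>z) powr (-k) = inverse ((c + z\<bullet>z) powr k)" by (simp add: powr_minus)
        moreover have "(c + z\<bullet>z) powr k > 0"
        proof -
          have "c + z\<bullet>z > 0" using cpos inner_ge_zero[of z] by linarith
          then show ?thesis by simp
        qed
        ultimately have "A / (c + z\<bullet>z) powr k < \<epsilon>" and "(c + z\<bullet>z) powr (-k) = inverse ((c + z\<bullet>z) powr k)"
          by (simp_all add: pos_divide_less_eq mult.commute)
        then show ?thesis unfolding w_def by (simp add: divide_inverse)
      qed
      define S where "S = cball (0::real^'n) Rb - ball 0 \<rho>"
      have Sc: "compact S" unfolding S_def by (intro compact_diff) auto
      have yS: "y \<in> S"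
      proof -
        have "\<not> norm y \<ge> Rb"
        proof
          assume "norm y \<ge> Rb"
          then have "w y < 0" by (rule far)
          moreover have "u y < w y" using uy unfolding w_def .
          ultimately show False using nn[rule_format, of y] by linarith
        qed
        then show ?thesis unfolding S_def using y by auto
      qed
      have wc: "continuous_on UNIV w"
      proof -
        have pos: "\<And>z::real^'n. 0 < c + z\<bullet>z" using cpos by (simp add: add_pos_nonneg)
        have p: "continuous_on UNIV (\<lambda>z::real^'n. (c+z\<bullet>z) powr (-k))"
          by (rule continuous_on_powr) (auto intro!: continuous_intros, metis pos less_irrefl)
        show ?thesis unfolding w_def by (intro continuous_on_diff continuous_on_mult continuous_on_const p)
      qed
      have lu: "lsc u" using V by (simp add: visc_pucci_ineq_def)
      obtain xs where xs: "xs \<in> S" "\<forall>z\<in>S. u xs - w xs \<le> u z - w z"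
        using lsc_attains_min[OF lsc_diff_cont[OF lu wc] Sc] yS by blast
      have fneg: "u xs - w xs < 0" using xs yS uy unfolding w_def by force
      have n1: "norm xs \<noteq> \<rho>"
      proof
        assume nr: "norm xs = \<rho>"
        then have "xs \<bullet> xs = c" unfolding c_def by (simp add: power2_norm_eq_inner[symmetric])
        then have "w xs = m - \<epsilon>" unfolding w_def using Aid by simp
        moreover have "m \<le> u xs" using mle nr by simp
        ultimately show False using fneg eps by simp
      qed
      have n2: "norm xs \<noteq> Rb"
      proof
        assume "norm xs = Rb"
        then have "w xs < 0" using far by simp
        then show False using fneg nn by (metis diff_gt_0_iff_gt diff_less_0_iff_less not_less less_trans)
      qed
      define U where "U = {z::real^'n. \<rho> < norm z \<and> norm z < Rb}"
      have Uo: "open U" unfolding U_def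
        by (intro open_Collect_conj open_Collect_less continuous_intros)
      have xsU: "xs \<in> U" using xs n1 n2 unfolding U_def S_def by auto
      have US: "U \<subseteq> S" unfolding U_def S_def by auto
      obtain e where e: "e > 0" "ball xs e \<subseteq> U" using Uo xsU openE by blast
      have touch: "\<forall>z\<in>ball xs e. u z - w z \<ge> u xs - w xs" using e xs US by auto
      define s where "s = xs \<bullet> xs"
      have sc: "s > c"
      proof -
        have "\<rho> < norm xs" using xsU unfolding U_def by simp
        then have "\<rho>\<^sup>2 < (norm xs)\<^sup>2" using \<rho> by (intro power_strict_mono) auto
        then show ?thesis unfolding s_def c_def by (simp add: power2_norm_eq_inner)
      qed
      define Pc where "Pc = (c + s) powr (-k-2)"
      have Pcpos: "Pc > 0" unfolding Pc_def using cpos sc by simp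
      have Pc1: "(c + s) powr (-k-1) = Pc * (c + s)"
      proof -
        have "(c + s) powr (-k-1) = (c+s) powr ((-k-2) + 1)" by (rule arg_cong[where f="\<lambda>t. (c+s) powr t"]) simp
        also have "\<dots> = (c+s) powr (-k-2) * (c+s) powr 1" by (simp only: powr_add)
        also have "\<dots> = Pc * (c+s)" unfolding Pc_def using cpos sc by simp
        finally show ?thesis .
      qed
      have "u xs powr q \<le> pucci_max l L (\<chi> i j. (-2*A*k*(c+xs\<bullet>xs) powr (-k-1))*(if i=j then 1 else 0) + (4*A*k*(k+1)*(c+xs\<bullet>xs) powr (-k-2))*(xs$i*xs$j))"
        using visc_apply[OF V C2_phi[OF cpos, of A k \<epsilon>] e(1)] touch unfolding w_def by simp
      also have "\<dots> \<le> - (-2*A*k*(c+xs\<bullet>xs) powr (-k-1)) * N * L - (4*A*k*(k+1)*(c+xs\<bullet>xs) powr (-k-2)) * l * (xs\<bullet>xs)"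
        unfolding N_def using l Apos kpos by (intro pucci_bound) auto
      also have "\<dots> = 2*A*k*Pc * ((c+s)*(N*L) - 2*(k+1)*l * s)"
        unfolding s_def[symmetric] Pc1 Pc_def[symmetric] by (simp add: algebra_simps)
      also have "\<dots> < 0"
      proof -
        have kl: "(k+1)*l = N*L + l" unfolding k_def using l by (simp add: field_simps)
        have e1: "2*(k+1)*l * s = 2*(N*L) * s + 2*(l * s)"
        proof -
          have "2*(k+1)*l * s = 2*((k+1)*l) * s" by simp
          also have "\<dots> = 2*(N*L + l) * s" by (simp only: kl)
          finally show ?thesis by (simp add: algebra_simps)
        qed
        have e2: "(c+s)*(N*L) < 2*(N*L) * s"
        proof -
          have "(c+s)*(N*L) < (s+s)*(N*L)" using sc N l by (intro mult_strict_right_mono) auto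
          then show ?thesis by (simp add: algebra_simps)
        qed
        have e3: "l * s > 0" using l sc cpos by simp
        have "(c+s)*(N*L) - 2*(k+1)*l * s < 0" using e1 e2 e3 by linarith
        moreover have "2*A*k*Pc > 0" using Apos kpos Pcpos by simp
        ultimately show ?thesis by (simp add: mult_pos_neg)
      qed
      finally have "u xs powr q < 0" .
      moreover have "u xs powr q \<ge> 0" by simp
      ultimately show False by simp
    qed
    have lb: "u x \<ge> A * (c + x\<bullet>x) powr (-k)"
    proof (rule field_le_epsilon)
      fix \<epsilon> :: real assume "\<epsilon> > 0"
      then show "A * (c + x\<bullet>x) powr (-k) \<le> u x + \<epsilon>" using claim[of \<epsilon> x] xr by simp
    qed
    have "x\<bullet>x \<le> 4*c" unfolding c_def using x
      by (metis norm_ge_zero power2_norm_eq_inner power_mono power_mult_distrib real_sqrt_four real_sqrt_pow2 zero_le_numeral)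
    then have "(c + 4*c) powr (-k) \<le> (c + x\<bullet>x) powr (-k)"
      using kpos cpos by (intro powr_mono2') (auto simp: add_pos_nonneg)
    then have "A * (5*c) powr (-k) \<le> u x" using lb Apos by (smt (verit) mult_left_mono)
    moreover have "A * (5*c) powr (-k) = m * (2/5) powr k"
    proof -
      have cc: "(2*c)/(5*c) = (2/5::real)" using cpos by simp
      have "(2*c) powr k * (5*c) powr (-k) = (2*c) powr k / (5*c) powr k" by (simp add: powr_minus divide_inverse)
      also have "\<dots> = ((2*c)/(5*c)) powr k" using cpos by (intro powr_divide[symmetric])
      also have "\<dots> = (2/5) powr k" by (simp only: cc)
      finally show ?thesis unfolding A_def by simp
    qed
    ultimately show ?thesis by simp
  qed
  then show ?thesis unfolding m_def k_def N_def .
qed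



theorem lemma2p4:
  fixes u :: "real^'n \<Rightarrow> real" and l L q :: real
  assumes "0 < l" "l \<le> L"
    and "L / l * (real CARD('n) - 1) + 1 > 2"
    and "q > 1"
    and "\<forall>x. u x \<ge> 0"
    and "visc_pucci_ineq l L q u"
  shows "\<exists>C>0. \<forall>R>0. Inf (u ` cball 0 R) \<le> C * R powr (- 2 / (q - 1))"
proof -
  note l = assms(1,2) and q = assms(4) and nn = assms(5) and V = assms(6)
  have q0: "q > 0" using q by simp
  define N where "N = real CARD('n)"
  define k where "k = N * L / l"
  have N: "N \<ge> 1" unfolding N_def by simp
  have NL: "N * L > 0" using N l by simp
  define c0 where "c0 = 3 * (2/5) powr k / (16*N*L)"
  have d16: "16*N*L > 0" using NL by (simp add: mult.assoc)
  have c0pos: "c0 > 0" unfolding c0_def using d16 by (intro divide_pos_pos) auto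
  define C where "C = (1/c0) powr (1/(q-1))"
  have bdd: "bdd_below (u ` S)" for S using nn by (auto intro: bdd_belowI[of _ 0])
  show ?thesis
  proof (intro exI[of _ C] conjI allI impI)
    show "C > 0" unfolding C_def using c0pos by simp
    fix R :: real assume R: "R > 0"
    define m where "m = Inf (u ` cball 0 R)"
    have ne: "cball (0::real^'n) R \<noteq> {}" using R by auto
    have m0: "m \<ge> 0" unfolding m_def using ne nn by (intro cInf_greatest) auto
    define \<rho> where "\<rho> = R/2"
    have \<rho>: "\<rho> > 0" unfolding \<rho>_def using R by simp
    have nerho: "cball (0::real^'n) \<rho> \<noteq> {}" using \<rho> by auto
    have mq0: "m powr q \<ge> 0" by simp
    have A: "u x \<ge> m powr q * (3*R\<^sup>2) / (16*N*L)" if x: "x \<in> cball 0 \<rho>" for x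
    proof -
      have xR: "x \<in> cball 0 R" using x R unfolding \<rho>_def by auto
      have "norm x \<le> \<rho>" using x by simp
      then have "(norm x)\<^sup>2 \<le> \<rho>\<^sup>2" by (intro power_mono) auto
      then have xx: "x \<bullet> x \<le> R\<^sup>2 / 4" unfolding \<rho>_def by (simp add: power2_norm_eq_inner power_divide)
      have "m powr q / (4*N*L) * (3*R\<^sup>2/4) \<le> m powr q / (4*N*L) * (R\<^sup>2 - x\<bullet>x)"
      proof (rule mult_left_mono)
        show "3*R\<^sup>2/4 \<le> R\<^sup>2 - x\<bullet>x" using xx by simp
        have "4*N*L > 0" using NL by (simp add: mult.assoc)
        then show "0 \<le> m powr q / (4*N*L)" using mq0 by simp
      qed
      also have "\<dots> \<le> u x" using stepA[OF l nn V R q0 xR] unfolding m_def N_def by simp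
      finally show ?thesis by (simp add: field_simps)
    qed
    have mrho: "Inf (u ` cball 0 \<rho>) \<ge> m powr q * (3*R\<^sup>2) / (16*N*L)"
      using A nerho by (intro cInf_greatest) auto
    have B: "u x \<ge> Inf (u ` cball 0 \<rho>) * (2/5) powr k" if x: "x \<in> cball 0 R" for x
    proof -
      have "norm x \<le> 2*\<rho>" using x unfolding \<rho>_def by simp
      from stepB[OF l nn V \<rho> q0 this] show ?thesis unfolding k_def N_def .
    qed
    have "Inf (u ` cball 0 \<rho>) * (2/5) powr k \<le> m"
      unfolding m_def using B ne by (intro cInf_greatest) auto
    moreover have "m powr q * (3*R\<^sup>2) / (16*N*L) * (2/5) powr k \<le> Inf (u ` cball 0 \<rho>) * (2/5) powr k"
      using mrho by (intro mult_right_mono) auto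
    moreover have "m powr q * (3*R\<^sup>2) / (16*N*L) * (2/5) powr k = c0 * R\<^sup>2 * m powr q"
      unfolding c0_def by (simp add: field_simps)
    ultimately have key: "c0 * R\<^sup>2 * m powr q \<le> m" by linarith
    show "m \<le> C * R powr (- 2 / (q - 1))"
    proof (cases "m = 0")
      case True
      then show ?thesis unfolding C_def using c0pos R by simp
    next
      case False
      then have mpos: "m > 0" using m0 by simp
      have "m powr q = m powr (1 + (q-1))" by simp
      also have "\<dots> = m powr 1 * m powr (q-1)" by (simp only: powr_add)
      also have "\<dots> = m * m powr (q-1)" using mpos by simp
      finally have "c0 * R\<^sup>2 * (m * m powr (q-1)) \<le> m * 1" using key by simp
      then have "m * (c0 * R\<^sup>2 * m powr (q-1)) \<le> m * 1" by (simp add: algebra_simps)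
      then have "c0 * R\<^sup>2 * m powr (q-1) \<le> 1" using mpos by (simp only: mult_le_cancel_left_pos)
      then have mb: "m powr (q-1) \<le> 1 / (c0 * R\<^sup>2)" using c0pos R by (simp add: field_simps)
      have "m = (m powr (q-1)) powr (1/(q-1))" using mpos q by (simp add: powr_powr)
      also have "\<dots> \<le> (1 / (c0 * R\<^sup>2)) powr (1/(q-1))" using mb q by (intro powr_mono2) auto
      also have "\<dots> = (1/c0) powr (1/(q-1)) * (1/R\<^sup>2) powr (1/(q-1))"
        using c0pos R by (simp add: powr_mult[symmetric])
      also have "(1/R\<^sup>2) = R powr (-2)" using R by (simp add: powr_minus powr_realpow divide_inverse)
      also have "(R powr (-2)) powr (1/(q-1)) = R powr (- 2 / (q - 1))" by (simp add: powr_powr)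
      finally show ?thesis unfolding C_def .
    qed
  qed
qed

end
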